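(* Let $\mathbf{P}$ be a finite poset with a metric $d_{\mathbf{P}}$. Then $d_{\mathrm{GT}}:\mathrm{Ob}(\mathrm{vect}^{\mathbf{P}})\times\mathrm{Ob}(\mathrm{vect}^{\mathbf{P}})\to[0,+\infty]$ is an extended pseudometric, i.e. for all $\mathbf{P}$-modules $M,N,O$: $d_{\mathrm{GT}}(M,M)=0$, $d_{\mathrm{GT}}(M,N)=d_{\mathrm{GT}}(N,M)$, and $d_{\mathrm{GT}}(M,O)\le d_{\mathrm{GT}}(M,N)+d_{\mathrm{GT}}(N,O)$.
   Context: Fix a field $k$; $\mathrm{vect}$ is the category of finite-dimensional $k$-vector spaces. A finite poset is a category with a unique morphism $x\to y$ iff $x\le y$; a $\mathbf{P}$-module is a functor $\mathbf{P}\to\mathrm{vect}$, and $\mathrm{vect}^{\mathbf{P}}$ is their category. For a monotone map $g$, $g^*$ denotes precomposition with $g$. A Galois insertion $f:\mathbf{Q}\rightleftarrows\mathbf{P}:g$ consists of monotone maps $f:\mathbf{Q}\to\mathbf{P}$, $g:\mathbf{P}\to\mathbf{Q}$ with $f(u)\le x\iff u\le g(x)$ for all $u,x$, and $f\circ g=\mathrm{id}_{\mathbf{P}}$. A Galois coupling of $(M,N)$ is a tuple $(\mathbf{Q},f\dashv g,h\dashv i,\Gamma)$ with $\mathbf{Q}$ a finite poset, $f:\mathbf{Q}\rightleftarrows\mathbf{P}:g$ and $h:\mathbf{Q}\rightleftarrows\mathbf{P}:i$ Galois insertions, and $\Gamma\in\mathrm{vect}^{\mathbf{Q}}$ with $g^*\Gamma\cong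 M$ and $i^*\Gamma\cong N$. Its cost is $\mathrm{cost}(\Gamma)=\sup_{q\in\mathbf{Q}}d_{\mathbf{P}}(f(q),h(q))$. The Galois transport distance $d_{\mathrm{GT}}(M,N)$ is the infimum of the costs of all Galois couplings of $(M,N)$, and $\infty$ if there is none. *)

theory Defs
  imports Complex_Main "HOL-Library.Extended_Real" "Jordan_Normal_Form.Matrix"
begin

definition finite_poset :: "'a set \<Rightarrow> ('a \<Rightarrow> 'a \<Rightarrow> bool) \<Rightarrow> bool" where
  "finite_poset A leA \<longleftrightarrow> finite A
     \<and> (\<forall>x\<in>A. leA x x)
     \<and> (\<forall>x\<in>A. \<forall>y\<in>A. leA x y \<and> leA y x \<longrightarrow> x = y)
     \<and> (\<forall>x\<in>A. \<forall>y\<in>A. \<forall>z\<in>A. leA x y \<and> leA y z \<longrightarrow> leA x z)"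

definition is_metric :: "('p \<Rightarrow> 'p \<Rightarrow> real) \<Rightarrow> bool" where
  "is_metric d \<longleftrightarrow> (\<forall>x y. d x y = 0 \<longleftrightarrow> x = y)
     \<and> (\<forall>x y. d x y = d y x)
     \<and> (\<forall>x y z. d x z \<le> d x y + d y z)"

text \<open>A module over the poset (A, leA): a functor into finite-dimensional k-vector spaces,
  each space being k^n (given by its dimension), each structure map M x y (for leA x y)
  a (dim y) x (dim x) matrix.\<close>
definition mdim :: "('a \<Rightarrow> 'a \<Rightarrow> 'k mat) \<Rightarrow> 'a \<Rightarrow> nat" where
  "mdim M x = dim_row (M x x)"

definition is_module :: "'a set \<Rightarrow> ('a \<Rightarrow> 'a \<Rightarrow> bool) \<Rightarrow> ('a \<Rightarrow> 'a \<Rightarrow> 'k::field mat) \<Rightarrow> bool" where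
  "is_module A leA M \<longleftrightarrow>
     (\<forall>x\<in>A. M x x = 1\<^sub>m (mdim M x))
     \<and> (\<forall>x\<in>A. \<forall>y\<in>A. leA x y \<longrightarrow> M x y \<in> carrier_mat (mdim M y) (mdim M x))
     \<and> (\<forall>x\<in>A. \<forall>y\<in>A. \<forall>z\<in>A. leA x y \<and> leA y z \<longrightarrow> M y z * M x y = M x z)"

definition mod_iso :: "'a set \<Rightarrow> ('a \<Rightarrow> 'a \<Rightarrow> bool) \<Rightarrow> ('a \<Rightarrow> 'a \<Rightarrow> 'k::field mat) \<Rightarrow> ('a \<Rightarrow> 'a \<Rightarrow> 'k mat) \<Rightarrow> bool" where
  "mod_iso A leA M N \<longleftrightarrow> (\<exists>\<phi>.
     (\<forall>x\<in>A. \<phi> x \<in> carrier_mat (mdim N x) (mdim M x) \<and> invertible_mat (\<phi> x))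
     \<and> (\<forall>x\<in>A. \<forall>y\<in>A. leA x y \<longrightarrow> \<phi> y * M x y = N x y * \<phi> x))"

abbreviation pmodule :: "('p::{finite,order} \<Rightarrow> 'p \<Rightarrow> 'k::field mat) \<Rightarrow> bool" where
  "pmodule M \<equiv> is_module UNIV (\<le>) M"

definition galois_insertion :: "nat set \<Rightarrow> (nat \<Rightarrow> nat \<Rightarrow> bool) \<Rightarrow> (nat \<Rightarrow> 'p::order) \<Rightarrow> ('p \<Rightarrow> nat) \<Rightarrow> bool" where
  "galois_insertion Qs leQ f g \<longleftrightarrow>
     (\<forall>u\<in>Qs. \<forall>v\<in>Qs. leQ u v \<longrightarrow> f u \<le> f v)
     \<and> (\<forall>x. g x \<in> Qs)
     \<and> (\<forall>x y. x \<le> y \<longrightarrow> leQ (g x) (g y))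
     \<and> (\<forall>u\<in>Qs. \<forall>x. f u \<le> x \<longleftrightarrow> leQ u (g x))
     \<and> (\<forall>x. f (g x) = x)"

definition pullback :: "('p \<Rightarrow> 'q) \<Rightarrow> ('q \<Rightarrow> 'q \<Rightarrow> 'k mat) \<Rightarrow> ('p \<Rightarrow> 'p \<Rightarrow> 'k mat)" where
  "pullback g \<Gamma> = (\<lambda>x y. \<Gamma> (g x) (g y))"

text \<open>Galois coupling of (M, N); finite posets Q are represented on finite subsets of nat.\<close>
definition galois_coupling ::
  "('p::{finite,order} \<Rightarrow> 'p \<Rightarrow> 'k::field mat) \<Rightarrow> ('p \<Rightarrow> 'p \<Rightarrow> 'k mat)
   \<Rightarrow> nat set \<Rightarrow> (nat \<Rightarrow> nat \<Rightarrow> bool) \<Rightarrow> (nat \<Rightarrow> 'p) \<Rightarrow> ('p \<Rightarrow> nat)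
   \<Rightarrow> (nat \<Rightarrow> 'p) \<Rightarrow> ('p \<Rightarrow> nat) \<Rightarrow> (nat \<Rightarrow> nat \<Rightarrow> 'k mat) \<Rightarrow> bool" where
  "galois_coupling M N Qs leQ f g h i \<Gamma> \<longleftrightarrow>
     finite_poset Qs leQ
     \<and> galois_insertion Qs leQ f g \<and> galois_insertion Qs leQ h i
     \<and> is_module Qs leQ \<Gamma>
     \<and> mod_iso UNIV (\<le>) (pullback g \<Gamma>) M
     \<and> mod_iso UNIV (\<le>) (pullback i \<Gamma>) N"

definition coupling_cost :: "('p \<Rightarrow> 'p \<Rightarrow> real) \<Rightarrow> nat set \<Rightarrow> (nat \<Rightarrow> 'p) \<Rightarrow> (nat \<Rightarrow> 'p) \<Rightarrow> ereal" where
  "coupling_cost d Qs f h = (SUP q\<in>Qs. ereal (d (f q) (h q)))"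

text \<open>Galois transport distance (Inf of the empty set is \<infinity> in ereal).\<close>
definition d_GT :: "('p::{finite,order} \<Rightarrow> 'p \<Rightarrow> real) \<Rightarrow> ('p \<Rightarrow> 'p \<Rightarrow> 'k::field mat) \<Rightarrow> ('p \<Rightarrow> 'p \<Rightarrow> 'k mat) \<Rightarrow> ereal" where
  "d_GT d M N = Inf {coupling_cost d Qs f h | Qs leQ f g h i (\<Gamma> :: nat \<Rightarrow> nat \<Rightarrow> 'k mat).
                       galois_coupling M N Qs leQ f g h i \<Gamma>}"

end

theory Submission
  imports Defs
begin


definition minv :: "'k::field mat \<Rightarrow> 'k mat" where
  "minv A = (SOME B. inverts_mat A B \<and> inverts_mat B A)"

lemma minv:
  fixes A :: "'k::field mat"
  assumes "invertible_mat A" "A \<in> carrier_mat n n"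
  shows "minv A \<in> carrier_mat n n \<and> A * minv A = 1\<^sub>m n \<and> minv A * A = 1\<^sub>m n"
proof -
  obtain B where "inverts_mat A B" "inverts_mat B A" using assms unfolding invertible_mat_def by blast
  hence H: "inverts_mat A (minv A) \<and> inverts_mat (minv A) A" unfolding minv_def
    by (metis (mono_tags, lifting) someI)
  then have c: "minv A \<in> carrier_mat n n" using assms(2) unfolding inverts_mat_def
    by (metis carrier_matD(1) carrier_matD(2) carrier_mat_triv index_mult_mat(3) index_one_mat(3))
  show ?thesis using H c assms(2) unfolding inverts_mat_def by auto
qed

lemma invertible_one: "invertible_mat (1\<^sub>m n :: 'k::field mat)"
  unfolding invertible_mat_def inverts_mat_def square_mat.simps
  by (rule conjI, simp, rule exI[of _ "1\<^sub>m n"], simp)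

lemma minv_invertible:
  fixes A :: "'k::field mat"
  assumes "invertible_mat A" "A \<in> carrier_mat n n"
  shows "invertible_mat (minv A)"
  using minv[OF assms] assms(2) unfolding invertible_mat_def inverts_mat_def square_mat.simps
  by (intro conjI exI[of _ A]) auto

lemma invertible_mult:
  fixes A B :: "'k::field mat"
  assumes "invertible_mat A" "A \<in> carrier_mat n n" "invertible_mat B" "B \<in> carrier_mat n n"
  shows "invertible_mat (A * B)"
proof -
  note a = minv[OF assms(1,2)] and b = minv[OF assms(3,4)]
  have c: "minv B * minv A \<in> carrier_mat n n" using a b by auto
  have a1: "minv A \<in> carrier_mat n n" "A * minv A = 1\<^sub>m n" "minv A * A = 1\<^sub>m n" using a by auto
  have b1: "minv B \<in> carrier_mat n n" "B * minv B = 1\<^sub>m n" "minv B * B = 1\<^sub>m n" using b by auto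
  have "A * B * (minv B * minv A) = A * (B * (minv B * minv A))"
    using assoc_mult_mat[OF assms(2) assms(4) c] .
  also have "B * (minv B * minv A) = (B * minv B) * minv A"
    using assoc_mult_mat[OF assms(4) b1(1) a1(1)] by simp
  finally have 1: "A * B * (minv B * minv A) = 1\<^sub>m n" using a1 b1 by simp
  have "minv B * minv A * (A * B) = minv B * (minv A * (A * B))"
    using assoc_mult_mat[OF b1(1) a1(1) mult_carrier_mat[OF assms(2) assms(4)]] .
  also have "minv A * (A * B) = (minv A * A) * B"
    using assoc_mult_mat[OF a1(1) assms(2) assms(4)] by simp
  finally have 2: "minv B * minv A * (A * B) = 1\<^sub>m n" using a1 b1 assms by simp
  show ?thesis unfolding invertible_mat_def inverts_mat_def square_mat.simps
    using 1 2 assms c by (intro conjI exI[of _ "minv B * minv A"]) auto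
qed

lemma module_carrier:
  assumes "is_module A R M" "x \<in> A" "y \<in> A" "R x y"
  shows "M x y \<in> carrier_mat (mdim M y) (mdim M x)"
  using assms unfolding is_module_def by blast

lemma module_id:
  assumes "is_module A R M" "x \<in> A"
  shows "M x x = 1\<^sub>m (mdim M x)"
  using assms unfolding is_module_def by blast

lemma module_comp:
  assumes "is_module A R M" "x \<in> A" "y \<in> A" "z \<in> A" "R x y" "R y z"
  shows "M y z * M x y = M x z"
  using assms unfolding is_module_def by blast

lemma mod_iso_refl:
  fixes M :: "'a \<Rightarrow> 'a \<Rightarrow> 'k::field mat"
  assumes "is_module A R M"
  shows "mod_iso A R M M"
  unfolding mod_iso_def
proof (intro exI[of _ "\<lambda>x. 1\<^sub>m (mdim M x)"] conjI ballI impI)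
  fix x assume "x \<in> A" thus "1\<^sub>m (mdim M x) \<in> carrier_mat (mdim M x) (mdim M x)" by simp
  show "invertible_mat (1\<^sub>m (mdim M x) :: 'k mat)" by (rule invertible_one)
next
  fix x y assume "x \<in> A" "y \<in> A" "R x y"
  then have "M x y \<in> carrier_mat (mdim M y) (mdim M x)" using module_carrier[OF assms] by blast
  thus "1\<^sub>m (mdim M y) * M x y = M x y * 1\<^sub>m (mdim M x)" by simp
qed

lemma mod_iso_sym:
  assumes "is_module A R M" "is_module A R N" "mod_iso A R M N"
  shows "mod_iso A R N M"
proof -
  obtain \<phi> where p1: "\<forall>x\<in>A. \<phi> x \<in> carrier_mat (mdim N x) (mdim M x) \<and> invertible_mat (\<phi> x)"
    and p2: "\<forall>x\<in>A. \<forall>y\<in>A. R x y \<longrightarrow> \<phi> y * M x y = N x y * \<phi> x"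
    using assms(3) unfolding mod_iso_def by blast
  have sq: "mdim N x = mdim M x" if "x \<in> A" for x
    using p1 that unfolding invertible_mat_def square_mat.simps by auto
  show ?thesis unfolding mod_iso_def
  proof (intro exI[of _ "\<lambda>x. minv (\<phi> x)"] conjI ballI impI)
    fix x assume x: "x \<in> A"
    have c: "\<phi> x \<in> carrier_mat (mdim M x) (mdim M x)" using p1 x sq by auto
    show "minv (\<phi> x) \<in> carrier_mat (mdim M x) (mdim N x)" using minv[OF _ c] p1 x sq by auto
    show "invertible_mat (minv (\<phi> x))" using minv_invertible[OF _ c] p1 x by auto
  next
    fix x y assume x: "x \<in> A" and y: "y \<in> A" and le: "R x y"
    have cx: "\<phi> x \<in> carrier_mat (mdim M x) (mdim M x)" using p1 x sq by auto
    have cy: "\<phi> y \<in> carrier_mat (mdim M y) (mdim M y)" using p1 y sq by auto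
    note ix = minv[OF _ cx] and iy = minv[OF _ cy]
    have ix': "minv (\<phi> x) \<in> carrier_mat (mdim M x) (mdim M x)" "\<phi> x * minv (\<phi> x) = 1\<^sub>m (mdim M x)"
      "minv (\<phi> x) * \<phi> x = 1\<^sub>m (mdim M x)" using ix p1 x by auto
    have iy': "minv (\<phi> y) \<in> carrier_mat (mdim M y) (mdim M y)" "\<phi> y * minv (\<phi> y) = 1\<^sub>m (mdim M y)"
      "minv (\<phi> y) * \<phi> y = 1\<^sub>m (mdim M y)" using iy p1 y by auto
    have cM: "M x y \<in> carrier_mat (mdim M y) (mdim M x)" using module_carrier[OF assms(1) x y le] .
    have cN: "N x y \<in> carrier_mat (mdim M y) (mdim M x)" using module_carrier[OF assms(2) x y le] sq x y by simp
    have "minv (\<phi> y) * N x y = minv (\<phi> y) * N x y * (\<phi> x * minv (\<phi> x))"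
      using ix' iy' cN by simp
    also have "\<dots> = minv (\<phi> y) * (N x y * \<phi> x) * minv (\<phi> x)"
      using ix' iy' cN cx by (simp add: assoc_mult_mat[of _ "mdim M y" "mdim M y" _ "mdim M x" _ "mdim M x"]
          assoc_mult_mat[of _ "mdim M y" "mdim M x" _ "mdim M x" _ "mdim M x"])
    also have "\<dots> = minv (\<phi> y) * (\<phi> y * M x y) * minv (\<phi> x)" using p2 x y le by simp
    also have "\<dots> = (minv (\<phi> y) * \<phi> y) * M x y * minv (\<phi> x)"
      using assoc_mult_mat[OF iy'(1) cy cM] by simp
    also have "\<dots> = M x y * minv (\<phi> x)" using iy' cM by simp
    finally show "minv (\<phi> y) * N x y = M x y * minv (\<phi> x)" .
  qed
qed

lemma mod_iso_trans:
  assumes "is_module A R M" "is_module A R N" "is_module A R K" "mod_iso A R M N" "mod_iso A R N K"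
  shows "mod_iso A R M K"
proof -
  obtain \<phi> where p1: "\<forall>x\<in>A. \<phi> x \<in> carrier_mat (mdim N x) (mdim M x) \<and> invertible_mat (\<phi> x)"
    and p2: "\<forall>x\<in>A. \<forall>y\<in>A. R x y \<longrightarrow> \<phi> y * M x y = N x y * \<phi> x"
    using assms(4) unfolding mod_iso_def by blast
  obtain \<chi> where q1: "\<forall>x\<in>A. \<chi> x \<in> carrier_mat (mdim K x) (mdim N x) \<and> invertible_mat (\<chi> x)"
    and q2: "\<forall>x\<in>A. \<forall>y\<in>A. R x y \<longrightarrow> \<chi> y * N x y = K x y * \<chi> x"
    using assms(5) unfolding mod_iso_def by blast
  have sq1: "mdim N x = mdim M x" if "x \<in> A" for x
    using p1 that unfolding invertible_mat_def square_mat.simps by auto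
  have sq2: "mdim K x = mdim N x" if "x \<in> A" for x
    using q1 that unfolding invertible_mat_def square_mat.simps by auto
  have sq: "mdim N x = mdim M x" "mdim K x = mdim M x" if "x \<in> A" for x
    using sq1 sq2 that by auto
  show ?thesis unfolding mod_iso_def
  proof (intro exI[of _ "\<lambda>x. \<chi> x * \<phi> x"] conjI ballI impI)
    fix x assume x: "x \<in> A"
    have c: "\<phi> x \<in> carrier_mat (mdim M x) (mdim M x)" "\<chi> x \<in> carrier_mat (mdim M x) (mdim M x)"
      using p1 q1 x sq by auto
    show "\<chi> x * \<phi> x \<in> carrier_mat (mdim K x) (mdim M x)" using c sq x by auto
    show "invertible_mat (\<chi> x * \<phi> x)" using invertible_mult[OF _ c(2) _ c(1)] p1 q1 x by auto
  next
    fix x y assume x: "x \<in> A" and y: "y \<in> A" and le: "R x y"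
    have cx: "\<phi> x \<in> carrier_mat (mdim M x) (mdim M x)" "\<chi> x \<in> carrier_mat (mdim M x) (mdim M x)"
      using p1 q1 x sq by auto
    have cy: "\<phi> y \<in> carrier_mat (mdim M y) (mdim M y)" "\<chi> y \<in> carrier_mat (mdim M y) (mdim M y)"
      using p1 q1 y sq by auto
    have cM: "M x y \<in> carrier_mat (mdim M y) (mdim M x)" using module_carrier[OF assms(1) x y le] .
    have cN: "N x y \<in> carrier_mat (mdim M y) (mdim M x)" using module_carrier[OF assms(2) x y le] sq x y by simp
    have cK: "K x y \<in> carrier_mat (mdim M y) (mdim M x)" using module_carrier[OF assms(3) x y le] sq x y by simp
    have "\<chi> y * \<phi> y * M x y = \<chi> y * (\<phi> y * M x y)" using assoc_mult_mat[OF cy(2) cy(1) cM] .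
    also have "\<dots> = \<chi> y * (N x y * \<phi> x)" using p2 x y le by simp
    also have "\<dots> = (\<chi> y * N x y) * \<phi> x" using assoc_mult_mat[OF cy(2) cN cx(1)] by simp
    also have "\<dots> = (K x y * \<chi> x) * \<phi> x" using q2 x y le by simp
    also have "\<dots> = K x y * (\<chi> x * \<phi> x)" using assoc_mult_mat[OF cK cx(2) cx(1)] .
    finally show "\<chi> y * \<phi> y * M x y = K x y * (\<chi> x * \<phi> x)" .
  qed
qed

lemma mod_iso_cong:
  assumes "mod_iso A R M N" "\<forall>x\<in>A. R x x" "\<forall>x\<in>A. \<forall>y\<in>A. R x y \<longrightarrow> M' x y = M x y"
  shows "mod_iso A R M' N"
proof -
  have "mdim M' x = mdim M x" if "x \<in> A" for x using assms(2,3) that unfolding mdim_def by auto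
  thus ?thesis using assms(1,3) unfolding mod_iso_def by (metis (no_types, lifting))
qed

lemma pullback_module:
  assumes "is_module Qs leQ \<Gamma>" "\<forall>x. g x \<in> Qs" "\<forall>x y. x \<le> y \<longrightarrow> leQ (g x) (g y)"
  shows "pmodule (pullback g \<Gamma>)"
proof -
  have md: "mdim (pullback g \<Gamma>) x = mdim \<Gamma> (g x)" for x unfolding mdim_def pullback_def by simp
  show ?thesis using assms unfolding is_module_def md unfolding pullback_def by (auto simp: md[unfolded pullback_def])
qed

lemma massoc: "dim_col (A::'a::semiring_0 mat) = dim_row B \<Longrightarrow> dim_col B = dim_row C \<Longrightarrow> A * B * C = A * (B * C)"
  by (rule assoc_mult_mat[of A "dim_row A" "dim_col A" B "dim_col B" C "dim_col C"]) auto

lemma mcancel: "(A::'a::semiring_1 mat) * B = 1\<^sub>m n \<Longrightarrow> dim_row C = n \<Longrightarrow> dim_col A = dim_row B \<Longrightarrow> dim_col B = dim_row C \<Longrightarrow> A * (B * C) = C"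
  by (metis massoc left_mult_one_mat')

lemma minv_dims:
  fixes A :: "'k::field mat"
  assumes "invertible_mat A" "A \<in> carrier_mat n n"
  shows "dim_row (minv A) = n" "dim_col (minv A) = n" "A * minv A = 1\<^sub>m n" "minv A * A = 1\<^sub>m n"
  using minv[OF assms] by auto

lemma conj_module:
  fixes \<Gamma> :: "nat \<Rightarrow> nat \<Rightarrow> 'k::field mat"
  assumes m: "is_module Qs leQ \<Gamma>"
    and ps: "\<forall>u\<in>Qs. \<psi> u \<in> carrier_mat (mdim \<Gamma> u) (mdim \<Gamma> u) \<and> invertible_mat (\<psi> u)"
  shows "is_module Qs leQ (\<lambda>u v. \<psi> v * \<Gamma> u v * minv (\<psi> u))"
    and "\<forall>u\<in>Qs. mdim (\<lambda>u v. \<psi> v * \<Gamma> u v * minv (\<psi> u)) u = mdim \<Gamma> u"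
proof -
  let ?G = "\<lambda>u v. \<psi> v * \<Gamma> u v * minv (\<psi> u)"
  have psd: "dim_row (\<psi> u) = mdim \<Gamma> u" "dim_col (\<psi> u) = mdim \<Gamma> u" if "u \<in> Qs" for u
    using ps that by auto
  have mi: "dim_row (minv (\<psi> u)) = mdim \<Gamma> u" "dim_col (minv (\<psi> u)) = mdim \<Gamma> u"
     "\<psi> u * minv (\<psi> u) = 1\<^sub>m (mdim \<Gamma> u)" "minv (\<psi> u) * \<psi> u = 1\<^sub>m (mdim \<Gamma> u)"
    if "u \<in> Qs" for u using minv_dims[of "\<psi> u" "mdim \<Gamma> u"] ps that by auto
  have gd: "dim_row (\<Gamma> u v) = mdim \<Gamma> v" "dim_col (\<Gamma> u v) = mdim \<Gamma> u"
    if "u \<in> Qs" "v \<in> Qs" "leQ u v" for u v using module_carrier[OF m that] by auto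
  have md: "mdim ?G u = mdim \<Gamma> u" if "u \<in> Qs" for u
    unfolding mdim_def[of ?G] using psd[OF that] by simp
  show "\<forall>u\<in>Qs. mdim ?G u = mdim \<Gamma> u" using md by blast
  show "is_module Qs leQ ?G" unfolding is_module_def
  proof (intro conjI ballI impI)
    fix x assume x: "x \<in> Qs"
    have "?G x x = \<psi> x * minv (\<psi> x)" unfolding module_id[OF m x] using psd[OF x] by simp
    also have "\<dots> = 1\<^sub>m (mdim \<Gamma> x)" using mi[OF x] by simp
    finally show "?G x x = 1\<^sub>m (mdim ?G x)" unfolding md[OF x] .
  next
    fix x y assume x: "x \<in> Qs" and y: "y \<in> Qs" and le: "leQ x y"
    show "?G x y \<in> carrier_mat (mdim ?G y) (mdim ?G x)"
      unfolding md[OF x] md[OF y] using mi(1,2)[OF x] psd[OF y] gd[OF x y le] by (intro carrier_matI) simp_all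
  next
    fix x y z assume x: "x \<in> Qs" and y: "y \<in> Qs" and z: "z \<in> Qs" and le: "leQ x y \<and> leQ y z"
    have lxy: "leQ x y" and lyz: "leQ y z" using le by auto
    note d = mi(1,2)[OF x] mi(1,2)[OF y] psd[OF y] psd[OF z] gd[OF x y lxy] gd[OF y z lyz]
    have e0: "?G y z * ?G x y = \<psi> z * (\<Gamma> y z * (minv (\<psi> y) * (\<psi> y * (\<Gamma> x y * minv (\<psi> x)))))"
      using d by (simp add: massoc)
    have e1: "minv (\<psi> y) * (\<psi> y * (\<Gamma> x y * minv (\<psi> x))) = \<Gamma> x y * minv (\<psi> x)"
      by (rule mcancel[OF mi(4)[OF y]]) (simp_all add: d)
    have e2: "\<Gamma> y z * (\<Gamma> x y * minv (\<psi> x)) = \<Gamma> x z * minv (\<psi> x)"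
      using massoc[of "\<Gamma> y z" "\<Gamma> x y" "minv (\<psi> x)"] d module_comp[OF m x y z lxy lyz] by simp
    have dz: "dim_row (\<Gamma> x z) = mdim \<Gamma> z" "dim_col (\<Gamma> x z) = mdim \<Gamma> x"
      unfolding module_comp[OF m x y z lxy lyz, symmetric] using d by simp_all
    show "?G y z * ?G x y = ?G x z"
      unfolding e0 e1 e2 using massoc[of "\<psi> z" "\<Gamma> x z" "minv (\<psi> x)"] d dz by simp
  qed
qed


lemma conj_pullback:
  fixes \<Gamma> :: "nat \<Rightarrow> nat \<Rightarrow> 'k::field mat"
  assumes m: "is_module Qs leQ \<Gamma>"
    and ps: "\<forall>u\<in>Qs. \<psi> u \<in> carrier_mat (mdim \<Gamma> u) (mdim \<Gamma> u) \<and> invertible_mat (\<psi> u)"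
    and g: "\<forall>x. g x \<in> Qs" "\<forall>x y. x \<le> y \<longrightarrow> leQ (g x) (g y)"
    and X: "pmodule X" and iso: "mod_iso UNIV (\<le>) (pullback g \<Gamma>) X"
  shows "mod_iso UNIV (\<le>) (pullback g (\<lambda>u v. \<psi> v * \<Gamma> u v * minv (\<psi> u))) X"
proof -
  let ?G = "\<lambda>u v. \<psi> v * \<Gamma> u v * minv (\<psi> u)"
  note cm = conj_module[OF m ps]
  have m1: "pmodule (pullback g \<Gamma>)" by (rule pullback_module[OF m g])
  have m2: "pmodule (pullback g ?G)" by (rule pullback_module[OF cm(1) g])
  have mdp: "mdim (pullback g \<Gamma>) x = mdim \<Gamma> (g x)" for x unfolding mdim_def pullback_def by simp
  have psd: "dim_row (\<psi> u) = mdim \<Gamma> u" "dim_col (\<psi> u) = mdim \<Gamma> u" if "u \<in> Qs" for u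
    using ps that by auto
  have mdp2: "mdim (pullback g ?G) x = mdim \<Gamma> (g x)" for x
  proof -
    have "mdim (pullback g ?G) x = dim_row (\<psi> (g x) * \<Gamma> (g x) (g x) * minv (\<psi> (g x)))"
      by (simp add: mdim_def pullback_def)
    also have "\<dots> = mdim \<Gamma> (g x)" using psd(1)[of "g x"] g(1) by simp
    finally show ?thesis .
  qed
  have mi: "dim_row (minv (\<psi> u)) = mdim \<Gamma> u" "dim_col (minv (\<psi> u)) = mdim \<Gamma> u"
     "\<psi> u * minv (\<psi> u) = 1\<^sub>m (mdim \<Gamma> u)" "minv (\<psi> u) * \<psi> u = 1\<^sub>m (mdim \<Gamma> u)"
    if "u \<in> Qs" for u using minv_dims[of "\<psi> u" "mdim \<Gamma> u"] ps that by auto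
  have gd: "dim_row (\<Gamma> u v) = mdim \<Gamma> v" "dim_col (\<Gamma> u v) = mdim \<Gamma> u"
    if "u \<in> Qs" "v \<in> Qs" "leQ u v" for u v using module_carrier[OF m that] by auto
  have "mod_iso UNIV (\<le>) (pullback g ?G) (pullback g \<Gamma>)"
    unfolding mod_iso_def
  proof (intro exI[of _ "\<lambda>x. minv (\<psi> (g x))"] conjI ballI impI)
    fix x :: 'a
    show "minv (\<psi> (g x)) \<in> carrier_mat (mdim (pullback g \<Gamma>) x) (mdim (pullback g ?G) x)"
      unfolding mdp mdp2 using mi(1,2)[of "g x"] g(1) by (intro carrier_matI) simp_all
    show "invertible_mat (minv (\<psi> (g x)))" using minv_invertible[of "\<psi> (g x)"] ps g by auto
  next
    fix x y :: 'a assume le: "x \<le> y"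
    have gx: "g x \<in> Qs" and gy: "g y \<in> Qs" and lg: "leQ (g x) (g y)" using g le by auto
    have "minv (\<psi> (g y)) * pullback g ?G x y = minv (\<psi> (g y)) * (\<psi> (g y) * (\<Gamma> (g x) (g y) * minv (\<psi> (g x))))"
      unfolding pullback_def using mi(1,2)[OF gx] mi(1,2)[OF gy] psd[OF gy] gd[OF gx gy lg] by (simp add: massoc)
    also have "\<dots> = \<Gamma> (g x) (g y) * minv (\<psi> (g x))"
      by (rule mcancel[OF mi(4)[OF gy]]) (simp_all add: mi(1,2)[OF gx] mi(1,2)[OF gy] psd[OF gy] gd[OF gx gy lg])
    finally show "minv (\<psi> (g y)) * pullback g ?G x y = pullback g \<Gamma> x y * minv (\<psi> (g x))"
      unfolding pullback_def .
  qed
  then show ?thesis using mod_iso_trans[OF m2 m1 X _ iso] by blast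
qed

lemma normalize:
  fixes \<Gamma> :: "nat \<Rightarrow> nat \<Rightarrow> 'k::field mat" and N :: "'p::{finite,order} \<Rightarrow> 'p \<Rightarrow> 'k mat"
  assumes m: "is_module Qs leQ \<Gamma>" and gi: "galois_insertion Qs leQ h i"
    and N: "pmodule N" and iso: "mod_iso UNIV (\<le>) (pullback i \<Gamma>) N"
  shows "\<exists>\<Gamma>'. is_module Qs leQ \<Gamma>' \<and> (\<forall>x y. x \<le> y \<longrightarrow> \<Gamma>' (i x) (i y) = N x y)
     \<and> (\<forall>(g::'p \<Rightarrow> nat) (X::'p \<Rightarrow> 'p \<Rightarrow> 'k mat). (\<forall>x. g x \<in> Qs) \<longrightarrow> (\<forall>x y. x \<le> y \<longrightarrow> leQ (g x) (g y))
          \<longrightarrow> pmodule X \<longrightarrow> mod_iso UNIV (\<le>) (pullback g \<Gamma>) X \<longrightarrow> mod_iso UNIV (\<le>) (pullback g \<Gamma>') X)"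
proof -
  obtain \<phi> where p1': "\<forall>x\<in>UNIV. \<phi> x \<in> carrier_mat (mdim N x) (mdim (pullback i \<Gamma>) x) \<and> invertible_mat (\<phi> x)"
    and p2': "\<forall>x\<in>UNIV. \<forall>y\<in>UNIV. x \<le> y \<longrightarrow> \<phi> y * pullback i \<Gamma> x y = N x y * \<phi> x"
    using iso unfolding mod_iso_def by (elim exE conjE) 
  have p1: "\<forall>x. \<phi> x \<in> carrier_mat (mdim N x) (mdim (pullback i \<Gamma>) x) \<and> invertible_mat (\<phi> x)"
    using p1' by simp
  have p2: "\<forall>x y. x \<le> y \<longrightarrow> \<phi> y * pullback i \<Gamma> x y = N x y * \<phi> x" using p2' by simp
  have mdp: "mdim (pullback i \<Gamma>) x = mdim \<Gamma> (i x)" for x unfolding mdim_def pullback_def by simp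
  have sq: "mdim N x = mdim \<Gamma> (i x)" for x
  proof -
    have a: "\<phi> x \<in> carrier_mat (mdim N x) (mdim \<Gamma> (i x))" "invertible_mat (\<phi> x)" using p1 mdp by auto
    then have "square_mat (\<phi> x)" unfolding invertible_mat_def by blast
    then show ?thesis using a(1) by (metis carrier_matD(1) carrier_matD(2) square_mat.simps)
  qed
  have ph: "\<phi> x \<in> carrier_mat (mdim \<Gamma> (i x)) (mdim \<Gamma> (i x))" "invertible_mat (\<phi> x)" for x
    using p1 sq mdp by auto
  have hi: "h (i x) = x" for x using gi unfolding galois_insertion_def by blast
  have iQ: "i x \<in> Qs" for x using gi unfolding galois_insertion_def by blast
  define \<psi> where "\<psi> u = (if u \<in> range i then \<phi> (h u) else 1\<^sub>m (mdim \<Gamma> u))" for u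
  have ps: "\<forall>u\<in>Qs. \<psi> u \<in> carrier_mat (mdim \<Gamma> u) (mdim \<Gamma> u) \<and> invertible_mat (\<psi> u)"
  proof
    fix u assume "u \<in> Qs"
    show "\<psi> u \<in> carrier_mat (mdim \<Gamma> u) (mdim \<Gamma> u) \<and> invertible_mat (\<psi> u)"
    proof (cases "u \<in> range i")
      case True
      then obtain x where u: "u = i x" by blast
      show ?thesis unfolding \<psi>_def u using ph[of x] hi[of x] by simp
    next
      case False
      then show ?thesis unfolding \<psi>_def using invertible_one by simp
    qed
  qed
  let ?G = "\<lambda>u v. \<psi> v * \<Gamma> u v * minv (\<psi> u)"
  have psi: "\<psi> (i x) = \<phi> x" for x unfolding \<psi>_def using hi by simp
  have r1: "?G (i x) (i y) = N x y" if le: "x \<le> y" for x y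
  proof -
    have cN: "N x y \<in> carrier_mat (mdim \<Gamma> (i y)) (mdim \<Gamma> (i x))"
      using module_carrier[OF N _ _ le] sq by simp
    note mi = minv[OF ph(2)[of x] ph(1)[of x]]
    have "?G (i x) (i y) = N x y * \<phi> x * minv (\<phi> x)" unfolding psi using p2 le unfolding pullback_def by simp
    also have "\<dots> = N x y * (\<phi> x * minv (\<phi> x))" using assoc_mult_mat[OF cN ph(1)[of x] conjunct1[OF mi]] conjunct1[OF conjunct2[OF mi]] by simp
    also have "\<dots> = N x y" using mi cN by simp
    finally show ?thesis .
  qed
  have r2: "is_module Qs leQ ?G" using conj_module(1)[OF m ps] .
  have r3: "\<forall>(g::'p \<Rightarrow> nat) (X::'p \<Rightarrow> 'p \<Rightarrow> 'k mat). (\<forall>x. g x \<in> Qs) \<longrightarrow> (\<forall>x y. x \<le> y \<longrightarrow> leQ (g x) (g y))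
          \<longrightarrow> pmodule X \<longrightarrow> mod_iso UNIV (\<le>) (pullback g \<Gamma>) X \<longrightarrow> mod_iso UNIV (\<le>) (pullback g ?G) X"
    using conj_pullback[OF m ps] by (intro allI impI) blast
  show ?thesis
    apply (rule exI[of _ ?G])
    apply (intro conjI)
      apply (rule r2)
     apply (intro allI impI, rule r1, assumption)
    apply (rule r3)
    done
qed



lemma gi_in: "galois_insertion Qs R f g \<Longrightarrow> g x \<in> Qs"
  unfolding galois_insertion_def by blast
lemma gi_fmono: "galois_insertion Qs R f g \<Longrightarrow> u \<in> Qs \<Longrightarrow> v \<in> Qs \<Longrightarrow> R u v \<Longrightarrow> f u \<le> f v"
  unfolding galois_insertion_def by blast
lemma gi_gmono: "galois_insertion Qs R f g \<Longrightarrow> x \<le> y \<Longrightarrow> R (g x) (g y)"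
  unfolding galois_insertion_def by blast
lemma gi_adj: "galois_insertion Qs R f g \<Longrightarrow> u \<in> Qs \<Longrightarrow> f u \<le> x \<longleftrightarrow> R u (g x)"
  unfolding galois_insertion_def by blast
lemma gi_fg: "galois_insertion Qs R f g \<Longrightarrow> f (g x) = x"
  unfolding galois_insertion_def by blast
lemma gi_unit: "galois_insertion Qs R f g \<Longrightarrow> u \<in> Qs \<Longrightarrow> R u (g (f u))"
  unfolding galois_insertion_def by blast
lemma gi_emb: "galois_insertion Qs R f g \<Longrightarrow> R (g x) (g y) \<longleftrightarrow> x \<le> y"
  unfolding galois_insertion_def by metis

lemma fp_refl: "finite_poset A R \<Longrightarrow> x \<in> A \<Longrightarrow> R x x"
  unfolding finite_poset_def by blast
lemma fp_antisym: "finite_poset A R \<Longrightarrow> x \<in> A \<Longrightarrow> y \<in> A \<Longrightarrow> R x y \<Longrightarrow> R y x \<Longrightarrow> x = y"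
  unfolding finite_poset_def by blast
lemma fp_trans: "finite_poset A R \<Longrightarrow> x \<in> A \<Longrightarrow> y \<in> A \<Longrightarrow> z \<in> A \<Longrightarrow> R x y \<Longrightarrow> R y z \<Longrightarrow> R x z"
  unfolding finite_poset_def by blast
lemma fp_finite: "finite_poset A R \<Longrightarrow> finite A"
  unfolding finite_poset_def by blast

locale glue =
  fixes Q1 :: "nat set" and l1 :: "nat \<Rightarrow> nat \<Rightarrow> bool"
    and f1 :: "nat \<Rightarrow> 'p::{finite,order}" and g1 :: "'p \<Rightarrow> nat" and h1 :: "nat \<Rightarrow> 'p" and i1 :: "'p \<Rightarrow> nat"
    and G1 :: "nat \<Rightarrow> nat \<Rightarrow> 'k::field mat"
    and Q2 :: "nat set" and l2 :: "nat \<Rightarrow> nat \<Rightarrow> bool"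
    and f2 :: "nat \<Rightarrow> 'p" and g2 :: "'p \<Rightarrow> nat" and h2 :: "nat \<Rightarrow> 'p" and i2 :: "'p \<Rightarrow> nat"
    and G2 :: "nat \<Rightarrow> nat \<Rightarrow> 'k mat"
    and N :: "'p \<Rightarrow> 'p \<Rightarrow> 'k mat"
  assumes P1: "finite_poset Q1 l1" and F1: "galois_insertion Q1 l1 f1 g1" and H1: "galois_insertion Q1 l1 h1 i1"
    and M1: "is_module Q1 l1 G1"
    and P2: "finite_poset Q2 l2" and F2: "galois_insertion Q2 l2 f2 g2" and H2: "galois_insertion Q2 l2 h2 i2"
    and M2: "is_module Q2 l2 G2"
    and NM: "pmodule N"
    and E1: "\<forall>x y. x \<le> y \<longrightarrow> G1 (i1 x) (i1 y) = N x y"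
    and E2: "\<forall>x y. x \<le> y \<longrightarrow> G2 (g2 x) (g2 y) = N x y"
begin

definition Q3 :: "nat set" where "Q3 = (\<lambda>u. 2*u) ` Q1 \<union> (\<lambda>v. 2*v+1) ` (Q2 - range g2)"

definition l3 :: "nat \<Rightarrow> nat \<Rightarrow> bool" where
  "l3 a b = (if even a then (if even b then l1 (a div 2) (b div 2) else l2 (g2 (h1 (a div 2))) (b div 2))
     else (if even b then l1 (i1 (f2 (a div 2))) (b div 2) else l2 (a div 2) (b div 2)))"

lemma l3_simps:
  "l3 (2*u) (2*u') = l1 u u'"
  "l3 (2*u) (Suc (2*v)) = l2 (g2 (h1 u)) v"
  "l3 (Suc (2*v)) (2*u) = l1 (i1 (f2 v)) u"
  "l3 (Suc (2*v)) (Suc (2*v')) = l2 v v'"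
  unfolding l3_def by simp_all

lemma Q3_cases:
  assumes "a \<in> Q3"
  obtains (E) u where "u \<in> Q1" "a = 2*u" | (O) v where "v \<in> Q2" "v \<notin> range g2" "a = 2*v+1"
  using assms unfolding Q3_def by blast

lemma Q3_E: "u \<in> Q1 \<Longrightarrow> 2*u \<in> Q3" unfolding Q3_def by blast
lemma Q3_O: "v \<in> Q2 \<Longrightarrow> v \<notin> range g2 \<Longrightarrow> 2*v+1 \<in> Q3" unfolding Q3_def by blast

lemmas gi1 = gi_in[OF F1] gi_fmono[OF F1] gi_gmono[OF F1] gi_adj[OF F1] gi_fg[OF F1] gi_unit[OF F1] gi_emb[OF F1]
lemmas gh1 = gi_in[OF H1] gi_fmono[OF H1] gi_gmono[OF H1] gi_adj[OF H1] gi_fg[OF H1] gi_unit[OF H1] gi_emb[OF H1]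
lemmas gi2 = gi_in[OF F2] gi_fmono[OF F2] gi_gmono[OF F2] gi_adj[OF F2] gi_fg[OF F2] gi_unit[OF F2] gi_emb[OF F2]
lemmas gh2 = gi_in[OF H2] gi_fmono[OF H2] gi_gmono[OF H2] gi_adj[OF H2] gi_fg[OF H2] gi_unit[OF H2] gi_emb[OF H2]

lemma poset3: "finite_poset Q3 l3"
proof -
  have fin: "finite Q3" unfolding Q3_def using fp_finite[OF P1] fp_finite[OF P2] by simp
  have refl: "l3 a a" if "a \<in> Q3" for a
    using that by (cases rule: Q3_cases) (auto simp: l3_simps fp_refl[OF P1] fp_refl[OF P2])
  have anti: "a = b" if a: "a \<in> Q3" and b: "b \<in> Q3" and ab: "l3 a b" and ba: "l3 b a" for a b
  using a proof (cases rule: Q3_cases)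
    case (E u)
    show ?thesis
    using b proof (cases rule: Q3_cases)
      case (E u')
      then show ?thesis using \<open>u \<in> Q1\<close> \<open>a = 2*u\<close> ab ba fp_antisym[OF P1, of u u'] by (simp add: l3_simps)
    next
      case (O v)
      have h1: "l2 (g2 (h1 u)) v" using ab E O by (simp add: l3_simps)
      have h2: "l1 (i1 (f2 v)) u" using ba E O by (simp add: l3_simps)
      have "h1 u \<le> f2 v" using gi2(2)[OF gi2(1) O(1) h1] gi2(5) by simp
      moreover have "f2 v \<le> h1 u" using gh1(2)[OF gh1(1) E(1) h2] gh1(5) by simp
      ultimately have eq: "f2 v = h1 u" by simp
      have "l2 v (g2 (h1 u))" using gi2(6)[OF O(1)] eq by simp
      then have "v = g2 (h1 u)" using fp_antisym[OF P2 O(1) gi2(1) _ h1] by simp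
      then show ?thesis using O(2) by blast
    qed
  next
    case (O v)
    show ?thesis
    using b proof (cases rule: Q3_cases)
      case (E u)
      have h1: "l2 (g2 (h1 u)) v" using ba E O by (simp add: l3_simps)
      have h2: "l1 (i1 (f2 v)) u" using ab E O by (simp add: l3_simps)
      have "h1 u \<le> f2 v" using gi2(2)[OF gi2(1) O(1) h1] gi2(5) by simp
      moreover have "f2 v \<le> h1 u" using gh1(2)[OF gh1(1) E(1) h2] gh1(5) by simp
      ultimately have eq: "f2 v = h1 u" by simp
      have "l2 v (g2 (h1 u))" using gi2(6)[OF O(1)] eq by simp
      then have "v = g2 (h1 u)" using fp_antisym[OF P2 O(1) gi2(1) _ h1] by simp
      then show ?thesis using O(2) by blast
    next
      case (O v')
      then show ?thesis using \<open>v \<in> Q2\<close> \<open>a = 2*v+1\<close> ab ba fp_antisym[OF P2, of v v'] by (simp add: l3_simps)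
    qed
  qed
  have trans: "l3 a c" if a: "a \<in> Q3" and b: "b \<in> Q3" and c: "c \<in> Q3" and ab: "l3 a b" and bc: "l3 b c" for a b c
  using a proof (cases rule: Q3_cases)
    case Ea: (E u)
    show ?thesis
    using b proof (cases rule: Q3_cases)
      case Eb: (E u')
      show ?thesis
      using c proof (cases rule: Q3_cases)
        case Ec: (E u'')
        then show ?thesis using Ea Eb ab bc fp_trans[OF P1, of u u' u''] by (simp add: l3_simps)
      next
        case Oc: (O v)
        have 1: "l1 u u'" and 2: "l2 (g2 (h1 u')) v" using Ea Eb Oc ab bc by (simp_all add: l3_simps)
        have "l2 (g2 (h1 u)) (g2 (h1 u'))" using gi2(3)[OF gh1(2)[OF Ea(1) Eb(1) 1]] .
        then show ?thesis using fp_trans[OF P2 gi2(1) gi2(1) Oc(1) _ 2] Ea Oc by (simp add: l3_simps)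
      qed
    next
      case Ob: (O v)
      have 1: "l2 (g2 (h1 u)) v" using Ea Ob ab by (simp add: l3_simps)
      show ?thesis
      using c proof (cases rule: Q3_cases)
        case Ec: (E u')
        have 2: "l1 (i1 (f2 v)) u'" using Ob Ec bc by (simp add: l3_simps)
        have "h1 u \<le> f2 v" using gi2(2)[OF gi2(1) Ob(1) 1] gi2(5) by simp
        then have "l1 (i1 (h1 u)) (i1 (f2 v))" by (rule gh1(3))
        then have "l1 (i1 (h1 u)) u'" using fp_trans[OF P1 gh1(1) gh1(1) Ec(1) _ 2] by simp
        then have "l1 u u'" using fp_trans[OF P1 Ea(1) gh1(1) Ec(1) gh1(6)[OF Ea(1)]] by simp
        then show ?thesis using Ea Ec by (simp add: l3_simps)
      next
        case Oc: (O v')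
        have 2: "l2 v v'" using Ob Oc bc by (simp add: l3_simps)
        show ?thesis using fp_trans[OF P2 gi2(1) Ob(1) Oc(1) 1 2] Ea Oc by (simp add: l3_simps)
      qed
    qed
  next
    case Oa: (O v)
    show ?thesis
    using b proof (cases rule: Q3_cases)
      case Eb: (E u)
      have 1: "l1 (i1 (f2 v)) u" using Oa Eb ab by (simp add: l3_simps)
      show ?thesis
      using c proof (cases rule: Q3_cases)
        case Ec: (E u')
        have 2: "l1 u u'" using Eb Ec bc by (simp add: l3_simps)
        show ?thesis using fp_trans[OF P1 gh1(1) Eb(1) Ec(1) 1 2] Oa Ec by (simp add: l3_simps)
      next
        case Oc: (O v')
        have 2: "l2 (g2 (h1 u)) v'" using Eb Oc bc by (simp add: l3_simps)
        have "f2 v \<le> h1 u" using gh1(2)[OF gh1(1) Eb(1) 1] gh1(5) by simp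
        then have "l2 (g2 (f2 v)) (g2 (h1 u))" by (rule gi2(3))
        then have "l2 (g2 (f2 v)) v'" using fp_trans[OF P2 gi2(1) gi2(1) Oc(1) _ 2] by simp
        then have "l2 v v'" using fp_trans[OF P2 Oa(1) gi2(1) Oc(1) gi2(6)[OF Oa(1)]] by simp
        then show ?thesis using Oa Oc by (simp add: l3_simps)
      qed
    next
      case Ob: (O v')
      have 1: "l2 v v'" using Oa Ob ab by (simp add: l3_simps)
      show ?thesis
      using c proof (cases rule: Q3_cases)
        case Ec: (E u)
        have 2: "l1 (i1 (f2 v')) u" using Ob Ec bc by (simp add: l3_simps)
        have "l1 (i1 (f2 v)) (i1 (f2 v'))" using gh1(3)[OF gi2(2)[OF Oa(1) Ob(1) 1]] .
        then show ?thesis using fp_trans[OF P1 gh1(1) gh1(1) Ec(1) _ 2] Oa Ec by (simp add: l3_simps)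
      next
        case Oc: (O v'')
        have 2: "l2 v' v''" using Ob Oc bc by (simp add: l3_simps)
        show ?thesis using fp_trans[OF P2 Oa(1) Ob(1) Oc(1) 1 2] Oa Oc by (simp add: l3_simps)
      qed
    qed
  qed
  show ?thesis unfolding finite_poset_def using fin refl anti trans by blast
qed

definition f3 :: "nat \<Rightarrow> 'p" where "f3 a = (if even a then f1 (a div 2) else f1 (i1 (f2 (a div 2))))"
definition g3 :: "'p \<Rightarrow> nat" where "g3 x = 2 * g1 x"
definition h3 :: "nat \<Rightarrow> 'p" where "h3 a = (if even a then h2 (g2 (h1 (a div 2))) else h2 (a div 2))"
definition i3 :: "'p \<Rightarrow> nat" where "i3 x = (if i2 x \<in> range g2 then 2 * i1 (f2 (i2 x)) else 2 * i2 x + 1)"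

lemma fh3_simps:
  "f3 (2*u) = f1 u" "f3 (Suc (2*v)) = f1 (i1 (f2 v))"
  "h3 (2*u) = h2 (g2 (h1 u))" "h3 (Suc (2*v)) = h2 v"
  unfolding f3_def h3_def by simp_all

lemma i3_in: "i2 x \<in> range g2 \<Longrightarrow> i3 x = 2 * i1 (f2 (i2 x))" "i2 x \<in> range g2 \<Longrightarrow> g2 (f2 (i2 x)) = i2 x"
  "i2 x \<notin> range g2 \<Longrightarrow> i3 x = Suc (2 * i2 x)"
  unfolding i3_def using gi2(5) by auto

lemma gi3: "galois_insertion Q3 l3 f3 g3"
proof -
  have mono: "f3 a \<le> f3 b" if a: "a \<in> Q3" and b: "b \<in> Q3" and ab: "l3 a b" for a b
    using a proof (cases rule: Q3_cases)
    case Ea: (E u)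
    show ?thesis using b proof (cases rule: Q3_cases)
      case Eb: (E u')
      show ?thesis using Ea Eb ab gi1(2)[of u u'] by (simp add: l3_simps fh3_simps)
    next
      case Ob: (O v)
      have 1: "l2 (g2 (h1 u)) v" using Ea Ob ab by (simp add: l3_simps)
      have "h1 u \<le> f2 v" using gi2(2)[OF gi2(1) Ob(1) 1] gi2(5) by simp
      then have "l1 u (i1 (f2 v))" using gh1(4)[OF Ea(1)] by simp
      then show ?thesis using Ea Ob gi1(2)[OF Ea(1) gh1(1)] by (simp add: fh3_simps)
    qed
  next
    case Oa: (O v)
    show ?thesis using b proof (cases rule: Q3_cases)
      case Eb: (E u)
      have 1: "l1 (i1 (f2 v)) u" using Oa Eb ab by (simp add: l3_simps)
      then show ?thesis using Oa Eb gi1(2)[OF gh1(1) Eb(1)] by (simp add: fh3_simps)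
    next
      case Ob: (O v')
      have 1: "l2 v v'" using Oa Ob ab by (simp add: l3_simps)
      have "l1 (i1 (f2 v)) (i1 (f2 v'))" using gh1(3)[OF gi2(2)[OF Oa(1) Ob(1) 1]] .
      then show ?thesis using Oa Ob gi1(2)[OF gh1(1) gh1(1)] by (simp add: fh3_simps)
    qed
  qed
  have adj: "f3 a \<le> x \<longleftrightarrow> l3 a (g3 x)" if a: "a \<in> Q3" for a x
    using a proof (cases rule: Q3_cases)
    case (E u)
    then show ?thesis using gi1(4)[OF E(1)] by (simp add: fh3_simps l3_simps g3_def)
  next
    case (O v)
    then show ?thesis using gi1(4)[OF gh1(1)] by (simp add: fh3_simps l3_simps g3_def)
  qed
  have inQ: "g3 x \<in> Q3" for x unfolding g3_def using Q3_E[OF gi1(1)] .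
  have gm: "l3 (g3 x) (g3 y)" if "x \<le> y" for x y unfolding g3_def l3_simps using gi1(3)[OF that] .
  have fg: "f3 (g3 x) = x" for x unfolding g3_def fh3_simps using gi1(5) .
  show ?thesis unfolding galois_insertion_def using mono adj inQ gm fg by blast
qed

lemma hi3: "galois_insertion Q3 l3 h3 i3"
proof -
  have mono: "h3 a \<le> h3 b" if a: "a \<in> Q3" and b: "b \<in> Q3" and ab: "l3 a b" for a b
    using a proof (cases rule: Q3_cases)
    case Ea: (E u)
    show ?thesis using b proof (cases rule: Q3_cases)
      case Eb: (E u')
      have "l1 u u'" using Ea Eb ab by (simp add: l3_simps)
      then have "l2 (g2 (h1 u)) (g2 (h1 u'))" using gi2(3)[OF gh1(2)[OF Ea(1) Eb(1)]] by blast
      then show ?thesis using Ea Eb gh2(2)[OF gi2(1) gi2(1)] by (simp add: fh3_simps)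
    next
      case Ob: (O v)
      have 1: "l2 (g2 (h1 u)) v" using Ea Ob ab by (simp add: l3_simps)
      then show ?thesis using Ea Ob gh2(2)[OF gi2(1) Ob(1)] by (simp add: fh3_simps)
    qed
  next
    case Oa: (O v)
    show ?thesis using b proof (cases rule: Q3_cases)
      case Eb: (E u)
      have 1: "l1 (i1 (f2 v)) u" using Oa Eb ab by (simp add: l3_simps)
      have "f2 v \<le> h1 u" using gh1(2)[OF gh1(1) Eb(1) 1] gh1(5) by simp
      then have "l2 (g2 (f2 v)) (g2 (h1 u))" by (rule gi2(3))
      then have "l2 v (g2 (h1 u))" using fp_trans[OF P2 Oa(1) gi2(1) gi2(1) gi2(6)[OF Oa(1)]] by blast
      then show ?thesis using Oa Eb gh2(2)[OF Oa(1) gi2(1)] by (simp add: fh3_simps)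
    next
      case Ob: (O v')
      have 1: "l2 v v'" using Oa Ob ab by (simp add: l3_simps)
      then show ?thesis using Oa Ob gh2(2)[OF Oa(1) Ob(1)] by (simp add: fh3_simps)
    qed
  qed
  have inQ: "i3 x \<in> Q3" for x
  proof (cases "i2 x \<in> range g2")
    case True then show ?thesis using i3_in(1) Q3_E[OF gh1(1)] by simp
  next
    case False then show ?thesis using i3_in(3)[OF False] Q3_O[OF gh2(1) False] by simp
  qed
  have im: "l3 (i3 x) (i3 y)" if le: "x \<le> y" for x y
  proof -
    have l: "l2 (i2 x) (i2 y)" using gh2(3)[OF le] .
    have ff: "f2 (i2 x) \<le> f2 (i2 y)" using gi2(2)[OF gh2(1) gh2(1) l] .
    show ?thesis
    proof (cases "i2 x \<in> range g2"; cases "i2 y \<in> range g2")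
      assume "i2 x \<in> range g2" "i2 y \<in> range g2"
      then show ?thesis using i3_in(1) gh1(3)[OF ff] by (simp add: l3_simps)
    next
      assume x: "i2 x \<in> range g2" and y: "i2 y \<notin> range g2"
      then show ?thesis using i3_in(1)[OF x] i3_in(2)[OF x] i3_in(3)[OF y] l by (simp add: l3_simps gh1(5))
    next
      assume x: "i2 x \<notin> range g2" and y: "i2 y \<in> range g2"
      then show ?thesis using i3_in(3)[OF x] i3_in(1)[OF y] gh1(3)[OF ff] by (simp add: l3_simps)
    next
      assume x: "i2 x \<notin> range g2" and y: "i2 y \<notin> range g2"
      then show ?thesis using i3_in(3) l by (simp add: l3_simps)
    qed
  qed
  have adj: "h3 a \<le> x \<longleftrightarrow> l3 a (i3 x)" if a: "a \<in> Q3" for a x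
    using a proof (cases rule: Q3_cases)
    case (E u)
    show ?thesis
    proof (cases "i2 x \<in> range g2")
      case True
      have "h3 a \<le> x \<longleftrightarrow> l2 (g2 (h1 u)) (i2 x)" using E gh2(4)[OF gi2(1)] by (simp add: fh3_simps)
      also have "\<dots> \<longleftrightarrow> l2 (g2 (h1 u)) (g2 (f2 (i2 x)))" using i3_in(2)[OF True] by simp
      also have "\<dots> \<longleftrightarrow> h1 u \<le> f2 (i2 x)" using gi2(7) .
      also have "\<dots> \<longleftrightarrow> l1 u (i1 (f2 (i2 x)))" using gh1(4)[OF E(1)] .
      also have "\<dots> \<longleftrightarrow> l3 a (i3 x)" using E i3_in(1)[OF True] by (simp add: l3_simps)
      finally show ?thesis .
    next
      case False
      then show ?thesis using E gh2(4)[OF gi2(1)] i3_in(3)[OF False] by (simp add: fh3_simps l3_simps)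
    qed
  next
    case (O v)
    show ?thesis
    proof (cases "i2 x \<in> range g2")
      case True
      have "h3 a \<le> x \<longleftrightarrow> l2 v (i2 x)" using O gh2(4)[OF O(1)] by (simp add: fh3_simps)
      also have "\<dots> \<longleftrightarrow> l2 v (g2 (f2 (i2 x)))" using i3_in(2)[OF True] by simp
      also have "\<dots> \<longleftrightarrow> f2 v \<le> f2 (i2 x)" using gi2(4)[OF O(1)] by simp
      also have "\<dots> \<longleftrightarrow> l1 (i1 (f2 v)) (i1 (f2 (i2 x)))" using gh1(7) by simp
      also have "\<dots> \<longleftrightarrow> l3 a (i3 x)" using O i3_in(1)[OF True] by (simp add: l3_simps)
      finally show ?thesis .
    next
      case False
      then show ?thesis using O gh2(4)[OF O(1)] i3_in(3)[OF False] by (simp add: fh3_simps l3_simps)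
    qed
  qed
  have hi: "h3 (i3 x) = x" for x
  proof (cases "i2 x \<in> range g2")
    case True
    then show ?thesis using i3_in(1)[OF True] i3_in(2)[OF True] gh2(5) by (simp add: fh3_simps gh1(5))
  next
    case False
    then show ?thesis using i3_in(3)[OF False] gh2(5) by (simp add: fh3_simps)
  qed
  show ?thesis unfolding galois_insertion_def using mono adj inQ im hi by blast
qed

definition G3 :: "nat \<Rightarrow> nat \<Rightarrow> 'k mat" where
  "G3 a b = (if even a then (if even b then G1 (a div 2) (b div 2)
       else G2 (g2 (h1 (a div 2))) (b div 2) * G1 (a div 2) (i1 (h1 (a div 2))))
     else (if even b then G1 (i1 (f2 (a div 2))) (b div 2) * G2 (a div 2) (g2 (f2 (a div 2)))
       else G2 (a div 2) (b div 2)))"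

lemma G3_simps:
  "G3 (2*u) (2*u') = G1 u u'"
  "G3 (2*u) (Suc (2*v)) = G2 (g2 (h1 u)) v * G1 u (i1 (h1 u))"
  "G3 (Suc (2*v)) (2*u) = G1 (i1 (f2 v)) u * G2 v (g2 (f2 v))"
  "G3 (Suc (2*v)) (Suc (2*v')) = G2 v v'"
  unfolding G3_def by simp_all

lemma mdim3: "mdim G3 (2*u) = mdim G1 u" "mdim G3 (Suc (2*v)) = mdim G2 v"
  unfolding mdim_def G3_simps by simp_all

lemma dims1: "u \<in> Q1 \<Longrightarrow> u' \<in> Q1 \<Longrightarrow> l1 u u' \<Longrightarrow> dim_row (G1 u u') = mdim G1 u'"
  "u \<in> Q1 \<Longrightarrow> u' \<in> Q1 \<Longrightarrow> l1 u u' \<Longrightarrow> dim_col (G1 u u') = mdim G1 u"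
  using module_carrier[OF M1, of u u'] by auto
lemma dims2: "u \<in> Q2 \<Longrightarrow> u' \<in> Q2 \<Longrightarrow> l2 u u' \<Longrightarrow> dim_row (G2 u u') = mdim G2 u'"
  "u \<in> Q2 \<Longrightarrow> u' \<in> Q2 \<Longrightarrow> l2 u u' \<Longrightarrow> dim_col (G2 u u') = mdim G2 u"
  using module_carrier[OF M2, of u u'] by auto

lemma dimK: "mdim G1 (i1 p) = mdim G2 (g2 p)"
  using E1 E2 unfolding mdim_def by simp

lemma EE: "p \<le> q \<Longrightarrow> G1 (i1 p) (i1 q) = G2 (g2 p) (g2 q)"
  using E1 E2 by simp

lemma mc: "(A::'a::semiring_0 mat) * B = D \<Longrightarrow> dim_col A = dim_row B \<Longrightarrow> dim_col B = dim_row X \<Longrightarrow> A * (B * X) = D * X"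
  using massoc by metis

lemma comp1: "u \<in> Q1 \<Longrightarrow> u' \<in> Q1 \<Longrightarrow> u'' \<in> Q1 \<Longrightarrow> l1 u u' \<Longrightarrow> l1 u' u'' \<Longrightarrow> G1 u' u'' * G1 u u' = G1 u u''"
  using module_comp[OF M1] by blast
lemma comp2: "u \<in> Q2 \<Longrightarrow> u' \<in> Q2 \<Longrightarrow> u'' \<in> Q2 \<Longrightarrow> l2 u u' \<Longrightarrow> l2 u' u'' \<Longrightarrow> G2 u' u'' * G2 u u' = G2 u u''"
  using module_comp[OF M2] by blast

lemma module3: "is_module Q3 l3 G3"
proof -
  have idt: "G3 a a = 1\<^sub>m (mdim G3 a)" if a: "a \<in> Q3" for a
    using a proof (cases rule: Q3_cases)
    case (E u) then show ?thesis using module_id[OF M1 E(1)] by (simp add: G3_simps mdim3)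
  next
    case (O v) then show ?thesis using module_id[OF M2 O(1)] by (simp add: G3_simps mdim3)
  qed
  have car: "G3 a b \<in> carrier_mat (mdim G3 b) (mdim G3 a)" if a: "a \<in> Q3" and b: "b \<in> Q3" and ab: "l3 a b" for a b
    using a proof (cases rule: Q3_cases)
    case Ea: (E u)
    show ?thesis using b proof (cases rule: Q3_cases)
      case Eb: (E u')
      show ?thesis using Ea Eb ab module_carrier[OF M1 Ea(1) Eb(1)] by (simp add: G3_simps mdim3 l3_simps)
    next
      case Ob: (O v)
      have 1: "l2 (g2 (h1 u)) v" using Ea Ob ab by (simp add: l3_simps)
      have 2: "l1 u (i1 (h1 u))" using gh1(6)[OF Ea(1)] .
      show ?thesis using Ea Ob 1 2 dims1[OF Ea(1) gh1(1) 2] dims2[OF gi2(1) Ob(1) 1] dimK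
        by (intro carrier_matI) (simp_all add: G3_simps mdim3)
    qed
  next
    case Oa: (O v)
    show ?thesis using b proof (cases rule: Q3_cases)
      case Eb: (E u)
      have 1: "l1 (i1 (f2 v)) u" using Oa Eb ab by (simp add: l3_simps)
      have 2: "l2 v (g2 (f2 v))" using gi2(6)[OF Oa(1)] .
      show ?thesis using Oa Eb 1 2 dims1[OF gh1(1) Eb(1) 1] dims2[OF Oa(1) gi2(1) 2] dimK
        by (intro carrier_matI) (simp_all add: G3_simps mdim3)
    next
      case Ob: (O v')
      show ?thesis using Oa Ob ab module_carrier[OF M2 Oa(1) Ob(1)] by (simp add: G3_simps mdim3 l3_simps)
    qed
  qed
  have comp: "G3 b c * G3 a b = G3 a c" if a: "a \<in> Q3" and b: "b \<in> Q3" and c: "c \<in> Q3"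
    and ab: "l3 a b" and bc: "l3 b c" for a b c
  proof -
    note G1in = gh1(1) and G2in = gi2(1)
    show ?thesis
    using a proof (cases rule: Q3_cases)
    case Ea: (E u)
    define p where "p = h1 u"
    have up: "l1 u (i1 p)" unfolding p_def using gh1(6)[OF Ea(1)] .
    show ?thesis using b proof (cases rule: Q3_cases)
      case Eb: (E u')
      have 1: "l1 u u'" using Ea Eb ab by (simp add: l3_simps)
      define p' where "p' = h1 u'"
      have up': "l1 u' (i1 p')" unfolding p'_def using gh1(6)[OF Eb(1)] .
      have pp: "p \<le> p'" unfolding p_def p'_def using gh1(2)[OF Ea(1) Eb(1) 1] .
      show ?thesis using c proof (cases rule: Q3_cases)
        case Ec: (E u'')
        have 2: "l1 u' u''" using Eb Ec bc by (simp add: l3_simps)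
        show ?thesis using Ea Eb Ec comp1[OF Ea(1) Eb(1) Ec(1) 1 2] by (simp add: G3_simps)
      next
        case Oc: (O v)
        have 2: "l2 (g2 p') v" using Eb Oc bc by (simp add: l3_simps p'_def)
        have ipp: "l1 (i1 p) (i1 p')" using gh1(3)[OF pp] .
        have gpp: "l2 (g2 p) (g2 p')" using gi2(3)[OF pp] .
        have "G3 b c * G3 a b = (G2 (g2 p') v * G1 u' (i1 p')) * G1 u u'"
          using Ea Eb Oc by (simp add: G3_simps p'_def)
        also have "\<dots> = G2 (g2 p') v * (G1 u' (i1 p') * G1 u u')"
          by (rule massoc) (simp_all add: dims1 dims2 Ea(1) Eb(1) Oc(1) 1 2 up' G1in G2in dimK)
        also have "G1 u' (i1 p') * G1 u u' = G1 u (i1 p')" using comp1[OF Ea(1) Eb(1) G1in 1 up'] .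
        also have "G1 u (i1 p') = G1 (i1 p) (i1 p') * G1 u (i1 p)"
          using comp1[OF Ea(1) G1in G1in up ipp] by simp
        also have "G1 (i1 p) (i1 p') = G2 (g2 p) (g2 p')" using EE[OF pp] .
        also have "G2 (g2 p') v * (G2 (g2 p) (g2 p') * G1 u (i1 p)) = G2 (g2 p) v * G1 u (i1 p)"
          by (rule mc[OF comp2[OF G2in G2in Oc(1) gpp 2]])
             (simp_all add: dims1 dims2 Ea(1) Eb(1) Oc(1) 1 2 up gpp G1in G2in dimK)
        also have "\<dots> = G3 a c" using Ea Oc by (simp add: G3_simps p_def)
        finally show ?thesis .
      qed
    next
      case Ob: (O v)
      have 1: "l2 (g2 p) v" using Ea Ob ab by (simp add: l3_simps p_def)
      show ?thesis using c proof (cases rule: Q3_cases)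
        case Ec: (E u')
        define q where "q = f2 v"
        have 2: "l1 (i1 q) u'" using Ob Ec bc by (simp add: l3_simps q_def)
        have vq: "l2 v (g2 q)" unfolding q_def using gi2(6)[OF Ob(1)] .
        have pq: "p \<le> q" unfolding q_def using gi2(2)[OF G2in Ob(1) 1] gi2(5) by simp
        have gpq: "l2 (g2 p) (g2 q)" using gi2(3)[OF pq] .
        have ipq: "l1 (i1 p) (i1 q)" using gh1(3)[OF pq] .
        have "G3 b c * G3 a b = (G1 (i1 q) u' * G2 v (g2 q)) * (G2 (g2 p) v * G1 u (i1 p))"
          using Ea Ob Ec by (simp add: G3_simps p_def q_def)
        also have "\<dots> = G1 (i1 q) u' * (G2 v (g2 q) * (G2 (g2 p) v * G1 u (i1 p)))"
          by (rule massoc) (simp_all add: dims1 dims2 Ea(1) Ob(1) Ec(1) 1 2 up vq G1in G2in dimK)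
        also have "G2 v (g2 q) * (G2 (g2 p) v * G1 u (i1 p)) = G2 (g2 p) (g2 q) * G1 u (i1 p)"
          by (rule mc[OF comp2[OF G2in Ob(1) G2in 1 vq]])
             (simp_all add: dims1 dims2 Ea(1) Ob(1) 1 up vq G1in G2in dimK)
        also have "G2 (g2 p) (g2 q) = G1 (i1 p) (i1 q)" using EE[OF pq] by simp
        also have "G1 (i1 p) (i1 q) * G1 u (i1 p) = G1 u (i1 q)" using comp1[OF Ea(1) G1in G1in up ipq] .
        also have "G1 (i1 q) u' * G1 u (i1 q) = G1 u u'"
          using comp1[OF Ea(1) G1in Ec(1) fp_trans[OF P1 Ea(1) G1in G1in up ipq] 2] .
        also have "\<dots> = G3 a c" using Ea Ec by (simp add: G3_simps)
        finally show ?thesis .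
      next
        case Oc: (O v')
        have 2: "l2 v v'" using Ob Oc bc by (simp add: l3_simps)
        have "G3 b c * G3 a b = G2 v v' * (G2 (g2 p) v * G1 u (i1 p))"
          using Ea Ob Oc by (simp add: G3_simps p_def)
        also have "\<dots> = G2 (g2 p) v' * G1 u (i1 p)"
          by (rule mc[OF comp2[OF G2in Ob(1) Oc(1) 1 2]])
             (simp_all add: dims1 dims2 Ea(1) Ob(1) Oc(1) 1 2 up G1in G2in dimK)
        also have "\<dots> = G3 a c" using Ea Oc by (simp add: G3_simps p_def)
        finally show ?thesis .
      qed
    qed
  next
    case Oa: (O v)
    define q where "q = f2 v"
    have vq: "l2 v (g2 q)" unfolding q_def using gi2(6)[OF Oa(1)] .
    show ?thesis using b proof (cases rule: Q3_cases)
      case Eb: (E u)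
      have 1: "l1 (i1 q) u" using Oa Eb ab by (simp add: l3_simps q_def)
      define p where "p = h1 u"
      have up: "l1 u (i1 p)" unfolding p_def using gh1(6)[OF Eb(1)] .
      have qp: "q \<le> p" unfolding p_def using gh1(2)[OF G1in Eb(1) 1] gh1(5) by simp
      show ?thesis using c proof (cases rule: Q3_cases)
        case Ec: (E u')
        have 2: "l1 u u'" using Eb Ec bc by (simp add: l3_simps)
        have "G3 b c * G3 a b = G1 u u' * (G1 (i1 q) u * G2 v (g2 q))"
          using Oa Eb Ec by (simp add: G3_simps q_def)
        also have "\<dots> = G1 (i1 q) u' * G2 v (g2 q)"
          by (rule mc[OF comp1[OF G1in Eb(1) Ec(1) 1 2]])
             (simp_all add: dims1 dims2 Oa(1) Eb(1) Ec(1) 1 2 vq G1in G2in dimK)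
        also have "\<dots> = G3 a c" using Oa Ec by (simp add: G3_simps q_def)
        finally show ?thesis .
      next
        case Oc: (O v')
        have 2: "l2 (g2 p) v'" using Eb Oc bc by (simp add: l3_simps p_def)
        have gqp: "l2 (g2 q) (g2 p)" using gi2(3)[OF qp] .
        have iqp: "l1 (i1 q) (i1 p)" using gh1(3)[OF qp] .
        have "G3 b c * G3 a b = (G2 (g2 p) v' * G1 u (i1 p)) * (G1 (i1 q) u * G2 v (g2 q))"
          using Oa Eb Oc by (simp add: G3_simps p_def q_def)
        also have "\<dots> = G2 (g2 p) v' * (G1 u (i1 p) * (G1 (i1 q) u * G2 v (g2 q)))"
          by (rule massoc) (simp_all add: dims1 dims2 Oa(1) Eb(1) Oc(1) 1 2 up vq G1in G2in dimK)
        also have "G1 u (i1 p) * (G1 (i1 q) u * G2 v (g2 q)) = G1 (i1 q) (i1 p) * G2 v (g2 q)"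
          by (rule mc[OF comp1[OF G1in Eb(1) G1in 1 up]])
             (simp_all add: dims1 dims2 Oa(1) Eb(1) 1 up vq G1in G2in dimK)
        also have "G1 (i1 q) (i1 p) = G2 (g2 q) (g2 p)" using EE[OF qp] .
        also have "G2 (g2 q) (g2 p) * G2 v (g2 q) = G2 v (g2 p)" using comp2[OF Oa(1) G2in G2in vq gqp] .
        also have "G2 (g2 p) v' * G2 v (g2 p) = G2 v v'"
          using comp2[OF Oa(1) G2in Oc(1) fp_trans[OF P2 Oa(1) G2in G2in vq gqp] 2] .
        also have "\<dots> = G3 a c" using Oa Oc by (simp add: G3_simps)
        finally show ?thesis .
      qed
    next
      case Ob: (O v')
      have 1: "l2 v v'" using Oa Ob ab by (simp add: l3_simps)
      define q' where "q' = f2 v'"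
      have vq': "l2 v' (g2 q')" unfolding q'_def using gi2(6)[OF Ob(1)] .
      have qq: "q \<le> q'" unfolding q_def q'_def using gi2(2)[OF Oa(1) Ob(1) 1] .
      show ?thesis using c proof (cases rule: Q3_cases)
        case Ec: (E u)
        have 2: "l1 (i1 q') u" using Ob Ec bc by (simp add: l3_simps q'_def)
        have gqq: "l2 (g2 q) (g2 q')" using gi2(3)[OF qq] .
        have iqq: "l1 (i1 q) (i1 q')" using gh1(3)[OF qq] .
        have "G3 b c * G3 a b = (G1 (i1 q') u * G2 v' (g2 q')) * G2 v v'"
          using Oa Ob Ec by (simp add: G3_simps q'_def)
        also have "\<dots> = G1 (i1 q') u * (G2 v' (g2 q') * G2 v v')"
          by (rule massoc) (simp_all add: dims1 dims2 Oa(1) Ob(1) Ec(1) 1 2 vq' G1in G2in dimK)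
        also have "G2 v' (g2 q') * G2 v v' = G2 v (g2 q')" using comp2[OF Oa(1) Ob(1) G2in 1 vq'] .
        also have "G2 v (g2 q') = G2 (g2 q) (g2 q') * G2 v (g2 q)"
          using comp2[OF Oa(1) G2in G2in vq gqq] by simp
        also have "G2 (g2 q) (g2 q') = G1 (i1 q) (i1 q')" using EE[OF qq] by simp
        also have "G1 (i1 q') u * (G1 (i1 q) (i1 q') * G2 v (g2 q)) = G1 (i1 q) u * G2 v (g2 q)"
          by (rule mc[OF comp1[OF G1in G1in Ec(1) iqq 2]])
             (simp_all add: dims1 dims2 Oa(1) Ec(1) 2 vq iqq G1in G2in dimK)
        also have "\<dots> = G3 a c" using Oa Ec by (simp add: G3_simps q_def)
        finally show ?thesis .
      next
        case Oc: (O v'')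
        have 2: "l2 v' v''" using Ob Oc bc by (simp add: l3_simps)
        show ?thesis using Oa Ob Oc comp2[OF Oa(1) Ob(1) Oc(1) 1 2] by (simp add: G3_simps)
      qed
    qed
  qed
  qed
  show ?thesis unfolding is_module_def using idt car comp by blast
qed

lemma pull_g3: "pullback g3 G3 = pullback g1 G1"
  unfolding pullback_def g3_def by (simp add: G3_simps)

lemma pull_i3: "x \<le> y \<Longrightarrow> pullback i3 G3 x y = pullback i2 G2 x y"
proof -
  assume le: "x \<le> y"
  have l: "l2 (i2 x) (i2 y)" using gh2(3)[OF le] .
  have ff: "f2 (i2 x) \<le> f2 (i2 y)" using gi2(2)[OF gh2(1) gh2(1) l] .
  show ?thesis unfolding pullback_def
  proof (cases "i2 x \<in> range g2"; cases "i2 y \<in> range g2")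
    assume x: "i2 x \<in> range g2" and y: "i2 y \<in> range g2"
    have "G3 (i3 x) (i3 y) = G1 (i1 (f2 (i2 x))) (i1 (f2 (i2 y)))" using i3_in(1)[OF x] i3_in(1)[OF y] by (simp add: G3_simps)
    also have "\<dots> = G2 (g2 (f2 (i2 x))) (g2 (f2 (i2 y)))" using EE[OF ff] .
    also have "\<dots> = G2 (i2 x) (i2 y)" using i3_in(2)[OF x] i3_in(2)[OF y] by simp
    finally show "G3 (i3 x) (i3 y) = G2 (i2 x) (i2 y)" .
  next
    assume x: "i2 x \<in> range g2" and y: "i2 y \<notin> range g2"
    define p where "p = f2 (i2 x)"
    have gp: "g2 p = i2 x" unfolding p_def using i3_in(2)[OF x] .
    have "G3 (i3 x) (i3 y) = G2 (g2 p) (i2 y) * G1 (i1 p) (i1 p)"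
      using i3_in(1)[OF x] i3_in(3)[OF y] by (simp add: G3_simps gh1(5) p_def)
    also have "\<dots> = G2 (i2 x) (i2 y)" unfolding gp module_id[OF M1 gh1(1)]
      using dims2(2)[OF gh2(1) gh2(1) l] dimK[of p] gp by simp
    finally show "G3 (i3 x) (i3 y) = G2 (i2 x) (i2 y)" .
  next
    assume x: "i2 x \<notin> range g2" and y: "i2 y \<in> range g2"
    define r where "r = f2 (i2 x)"
    define q where "q = f2 (i2 y)"
    have gq: "g2 q = i2 y" unfolding q_def using i3_in(2)[OF y] .
    have rq: "r \<le> q" unfolding r_def q_def using ff .
    have xr: "l2 (i2 x) (g2 r)" unfolding r_def using gi2(6)[OF gh2(1)] .
    have "G3 (i3 x) (i3 y) = G1 (i1 r) (i1 q) * G2 (i2 x) (g2 r)"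
      using i3_in(3)[OF x] i3_in(1)[OF y] by (simp add: G3_simps r_def q_def)
    also have "\<dots> = G2 (g2 r) (g2 q) * G2 (i2 x) (g2 r)" using EE[OF rq] by simp
    also have "\<dots> = G2 (i2 x) (g2 q)" using comp2[OF gh2(1) gi2(1) gi2(1) xr gi2(3)[OF rq]] .
    finally show "G3 (i3 x) (i3 y) = G2 (i2 x) (i2 y)" using gq by simp
  next
    assume x: "i2 x \<notin> range g2" and y: "i2 y \<notin> range g2"
    show "G3 (i3 x) (i3 y) = G2 (i2 x) (i2 y)" using i3_in(3)[OF x] i3_in(3)[OF y] by (simp add: G3_simps)
  qed
qed

lemma cost3:
  assumes d: "is_metric d"
  shows "coupling_cost d Q3 f3 h3 \<le> coupling_cost d Q1 f1 h1 + coupling_cost d Q2 f2 h2"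
  unfolding coupling_cost_def
proof (rule SUP_least)
  fix a assume a: "a \<in> Q3"
  have tri: "d x z \<le> d x y + d y z" for x y z using d unfolding is_metric_def by blast
  have b1: "ereal (d (f1 u) (h1 u)) \<le> (SUP q\<in>Q1. ereal (d (f1 q) (h1 q)))" if "u \<in> Q1" for u
    using that by (rule SUP_upper)
  have b2: "ereal (d (f2 u) (h2 u)) \<le> (SUP q\<in>Q2. ereal (d (f2 q) (h2 q)))" if "u \<in> Q2" for u
    using that by (rule SUP_upper)
  show "ereal (d (f3 a) (h3 a)) \<le> (SUP q\<in>Q1. ereal (d (f1 q) (h1 q))) + (SUP q\<in>Q2. ereal (d (f2 q) (h2 q)))"
    using a proof (cases rule: Q3_cases)
    case (E u)
    have "d (f3 a) (h3 a) \<le> d (f1 u) (h1 u) + d (f2 (g2 (h1 u))) (h2 (g2 (h1 u)))"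
      using E tri[of "f1 u" "h2 (g2 (h1 u))" "h1 u"] by (simp add: fh3_simps gi2(5))
    then have "ereal (d (f3 a) (h3 a)) \<le> ereal (d (f1 u) (h1 u)) + ereal (d (f2 (g2 (h1 u))) (h2 (g2 (h1 u))))"
      by simp
    also have "\<dots> \<le> (SUP q\<in>Q1. ereal (d (f1 q) (h1 q))) + (SUP q\<in>Q2. ereal (d (f2 q) (h2 q)))"
      by (rule add_mono[OF b1[OF E(1)] b2[OF gi2(1)]])
    finally show ?thesis .
  next
    case (O v)
    have "d (f3 a) (h3 a) \<le> d (f1 (i1 (f2 v))) (h1 (i1 (f2 v))) + d (f2 v) (h2 v)"
      using O tri[of "f1 (i1 (f2 v))" "h2 v" "f2 v"] by (simp add: fh3_simps gh1(5))
    then have "ereal (d (f3 a) (h3 a)) \<le> ereal (d (f1 (i1 (f2 v))) (h1 (i1 (f2 v)))) + ereal (d (f2 v) (h2 v))"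
      by simp
    also have "\<dots> \<le> (SUP q\<in>Q1. ereal (d (f1 q) (h1 q))) + (SUP q\<in>Q2. ereal (d (f2 q) (h2 q)))"
      by (rule add_mono[OF b1[OF gh1(1)] b2[OF O(1)]])
    finally show ?thesis .
  qed
qed

end

lemma coupling_cost_nonneg:
  assumes d: "is_metric d" and gi: "galois_insertion Qs leQ f g"
  shows "0 \<le> coupling_cost d Qs f h"
proof -
  have nn: "0 \<le> d x y" for x y
  proof -
    have "d x x \<le> d x y + d y x" "d x x = 0" "d y x = d x y" using d unfolding is_metric_def by blast+
    then show ?thesis by simp
  qed
  have q: "g undefined \<in> Qs" using gi_in[OF gi] .
  have "ereal 0 \<le> ereal (d (f (g undefined)) (h (g undefined)))" using nn by simp
  also have "\<dots> \<le> coupling_cost d Qs f h" unfolding coupling_cost_def using q by (rule SUP_upper)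
  finally show ?thesis by (simp only: zero_ereal_def)
qed

lemma triangle_coupling:
  fixes M N K :: "'p::{finite,order} \<Rightarrow> 'p \<Rightarrow> 'k::field mat"
  assumes d: "is_metric d" and MM: "pmodule M" and NM: "pmodule N" and KM: "pmodule K"
    and c1: "galois_coupling M N Q1 l1 f1 g1 h1 i1 \<Gamma>1"
    and c2: "galois_coupling N K Q2 l2 f2 g2 h2 i2 \<Gamma>2"
  shows "\<exists>Qs leQ f g h i (\<Gamma> :: nat \<Rightarrow> nat \<Rightarrow> 'k mat). galois_coupling M K Qs leQ f g h i \<Gamma>
     \<and> coupling_cost d Qs f h \<le> coupling_cost d Q1 f1 h1 + coupling_cost d Q2 f2 h2"
proof -
  have P1: "finite_poset Q1 l1" and F1: "galois_insertion Q1 l1 f1 g1" and H1: "galois_insertion Q1 l1 h1 i1"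
    and m1: "is_module Q1 l1 \<Gamma>1" and iso1M: "mod_iso UNIV (\<le>) (pullback g1 \<Gamma>1) M"
    and iso1N: "mod_iso UNIV (\<le>) (pullback i1 \<Gamma>1) N"
    using c1 unfolding galois_coupling_def by blast+
  have P2: "finite_poset Q2 l2" and F2: "galois_insertion Q2 l2 f2 g2" and H2: "galois_insertion Q2 l2 h2 i2"
    and m2: "is_module Q2 l2 \<Gamma>2" and iso2N: "mod_iso UNIV (\<le>) (pullback g2 \<Gamma>2) N"
    and iso2K: "mod_iso UNIV (\<le>) (pullback i2 \<Gamma>2) K"
    using c2 unfolding galois_coupling_def by blast+
  obtain G1 where G1m: "is_module Q1 l1 G1" and E1: "\<forall>x y. x \<le> y \<longrightarrow> G1 (i1 x) (i1 y) = N x y"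
    and pres1: "\<forall>(g::'p \<Rightarrow> nat) (X::'p \<Rightarrow> 'p \<Rightarrow> 'k mat). (\<forall>x. g x \<in> Q1) \<longrightarrow> (\<forall>x y. x \<le> y \<longrightarrow> l1 (g x) (g y))
          \<longrightarrow> pmodule X \<longrightarrow> mod_iso UNIV (\<le>) (pullback g \<Gamma>1) X \<longrightarrow> mod_iso UNIV (\<le>) (pullback g G1) X"
    using normalize[OF m1 H1 NM iso1N] by blast
  obtain G2 where G2m: "is_module Q2 l2 G2" and E2: "\<forall>x y. x \<le> y \<longrightarrow> G2 (g2 x) (g2 y) = N x y"
    and pres2: "\<forall>(g::'p \<Rightarrow> nat) (X::'p \<Rightarrow> 'p \<Rightarrow> 'k mat). (\<forall>x. g x \<in> Q2) \<longrightarrow> (\<forall>x y. x \<le> y \<longrightarrow> l2 (g x) (g y))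
          \<longrightarrow> pmodule X \<longrightarrow> mod_iso UNIV (\<le>) (pullback g \<Gamma>2) X \<longrightarrow> mod_iso UNIV (\<le>) (pullback g G2) X"
    using normalize[OF m2 F2 NM iso2N] by blast
  have iso1M': "mod_iso UNIV (\<le>) (pullback g1 G1) M"
    using pres1 gi_in[OF F1] gi_gmono[OF F1] MM iso1M by blast
  have iso2K': "mod_iso UNIV (\<le>) (pullback i2 G2) K"
    using pres2 gi_in[OF H2] gi_gmono[OF H2] KM iso2K by blast
  interpret g: glue Q1 l1 f1 g1 h1 i1 G1 Q2 l2 f2 g2 h2 i2 G2 N
    by (unfold_locales; fact)
  have isoM: "mod_iso UNIV (\<le>) (pullback g.g3 g.G3) M" unfolding g.pull_g3 by (rule iso1M')
  have isoK: "mod_iso UNIV (\<le>) (pullback g.i3 g.G3) K"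
    by (rule mod_iso_cong[OF iso2K']) (simp_all add: g.pull_i3)
  have "galois_coupling M K g.Q3 g.l3 g.f3 g.g3 g.h3 g.i3 g.G3"
    unfolding galois_coupling_def using g.poset3 g.gi3 g.hi3 g.module3 isoM isoK by blast
  moreover have "coupling_cost d g.Q3 g.f3 g.h3 \<le> coupling_cost d Q1 f1 h1 + coupling_cost d Q2 f2 h2"
    using g.cost3[OF d] .
  ultimately show ?thesis by blast
qed


lemma dGT_le:
  fixes M N :: "'p::{finite,order} \<Rightarrow> 'p \<Rightarrow> 'k::field mat"
  assumes "galois_coupling M N Qs leQ f g h i (\<Gamma> :: nat \<Rightarrow> nat \<Rightarrow> 'k mat)"
  shows "d_GT d M N \<le> coupling_cost d Qs f h"
  unfolding d_GT_def by (rule Inf_lower) (use assms in blast)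

lemma dGT_ge:
  fixes M N :: "'p::{finite,order} \<Rightarrow> 'p \<Rightarrow> 'k::field mat"
  assumes "\<And>Qs leQ f g h i (\<Gamma> :: nat \<Rightarrow> nat \<Rightarrow> 'k mat). galois_coupling M N Qs leQ f g h i \<Gamma> \<Longrightarrow> z \<le> coupling_cost d Qs f h"
  shows "z \<le> d_GT d M N"
  unfolding d_GT_def by (rule Inf_greatest) (use assms in blast)

lemma dGT_nonneg:
  fixes M N :: "'p::{finite,order} \<Rightarrow> 'p \<Rightarrow> 'k::field mat"
  assumes d: "is_metric d"
  shows "0 \<le> d_GT d M N"
  by (rule dGT_ge) (use coupling_cost_nonneg[OF d] in \<open>auto simp: galois_coupling_def\<close>)

lemma coupling_swap:
  "galois_coupling M N Qs leQ f g h i \<Gamma> \<Longrightarrow> galois_coupling N M Qs leQ h i f g \<Gamma>"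
  unfolding galois_coupling_def by blast

lemma cost_swap: "is_metric d \<Longrightarrow> coupling_cost d Qs h f = coupling_cost d Qs f h"
  unfolding coupling_cost_def is_metric_def by metis

lemma dGT_sym_le:
  fixes M N :: "'p::{finite,order} \<Rightarrow> 'p \<Rightarrow> 'k::field mat"
  assumes d: "is_metric d"
  shows "d_GT d M N \<le> d_GT d N M"
proof (rule dGT_ge)
  fix Qs leQ f g h i and \<Gamma> :: "nat \<Rightarrow> nat \<Rightarrow> 'k mat"
  assume "galois_coupling N M Qs leQ f g h i \<Gamma>"
  then have "galois_coupling M N Qs leQ h i f g \<Gamma>" by (rule coupling_swap)
  then have "d_GT d M N \<le> coupling_cost d Qs h f" by (rule dGT_le)
  then show "d_GT d M N \<le> coupling_cost d Qs f h" using cost_swap[OF d] by simp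
qed

lemma Inf_add_le:
  fixes A B :: "ereal set"
  assumes A: "\<forall>a\<in>A. 0 \<le> a" and B: "\<forall>b\<in>B. 0 \<le> b" and z: "\<forall>a\<in>A. \<forall>b\<in>B. z \<le> a + b"
  shows "z \<le> Inf A + Inf B"
proof (cases "A = {} \<or> B = {}")
  case True
  have "0 \<le> Inf A" "0 \<le> Inf B" using A B by (auto intro: Inf_greatest)
  then have "Inf A \<noteq> -\<infinity>" "Inf B \<noteq> -\<infinity>" by auto
  then show ?thesis using True by (auto simp: top_ereal_def)
next
  case False
  then have An: "A \<noteq> {}" and Bn: "B \<noteq> {}" by auto
  have iB: "0 \<le> Inf B" using B by (auto intro: Inf_greatest)
  have "Inf A + Inf B = (INF a\<in>A. a + Inf B)"
    using INF_ereal_add_left[OF An, of "Inf B" "\<lambda>a. a"] iB A by auto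
  also have "\<dots> = (INF a\<in>A. (INF b\<in>B. a + b))"
  proof (rule INF_cong[OF refl])
    fix a assume a: "a \<in> A"
    show "a + Inf B = (INF b\<in>B. a + b)"
      using INF_ereal_add_right[OF Bn, of a "\<lambda>b. b"] a A B by auto
  qed
  finally have eq: "Inf A + Inf B = (INF a\<in>A. (INF b\<in>B. a + b))" .
  show ?thesis unfolding eq using z by (auto intro!: INF_greatest)
qed

lemma dGT_refl:
  fixes M :: "'p::{finite,order} \<Rightarrow> 'p \<Rightarrow> 'k::field mat"
  assumes d: "is_metric d" and MM: "pmodule M"
  shows "d_GT d M M = 0"
proof -
  obtain e :: "'p \<Rightarrow> nat" where be: "bij_betw e (UNIV :: 'p set) {0..<card (UNIV :: 'p set)}"
    using ex_bij_betw_finite_nat[of "UNIV :: 'p set"] by auto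
  have inj: "inj e" using be unfolding bij_betw_def by blast
  define f where "f = inv_into UNIV e"
  have fe: "f (e x) = x" for x unfolding f_def using inj by (simp add: inv_into_f_f)
  define Qs where "Qs = range e"
  define leQ where "leQ u v = (f u \<le> f v)" for u v
  define \<Gamma> where "\<Gamma> u v = M (f u) (f v)" for u v
  have ef: "u \<in> Qs \<Longrightarrow> e (f u) = u" for u unfolding Qs_def using fe by auto
  have fp: "finite_poset Qs leQ"
    unfolding finite_poset_def
  proof (intro conjI ballI impI)
    show "finite Qs" unfolding Qs_def by simp
    fix x y z assume x: "x \<in> Qs" and y: "y \<in> Qs" and z: "z \<in> Qs"
    show "leQ x x" unfolding leQ_def by simp
    { assume "leQ x y \<and> leQ y x"
      then have "f x = f y" unfolding leQ_def by (metis order.antisym)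
      then show "x = y" using ef[OF x] ef[OF y] by metis }
    { assume "leQ x y \<and> leQ y z"
      then show "leQ x z" unfolding leQ_def by (metis order.trans) }
  qed
  have gi: "galois_insertion Qs leQ f e"
    unfolding galois_insertion_def leQ_def Qs_def using fe by auto
  have md: "mdim \<Gamma> u = mdim M (f u)" for u unfolding mdim_def \<Gamma>_def by simp
  have mm: "is_module Qs leQ \<Gamma>"
    unfolding is_module_def md
  proof (intro conjI ballI impI)
    fix x y z assume x: "x \<in> Qs" and y: "y \<in> Qs" and z: "z \<in> Qs"
    show "\<Gamma> x x = 1\<^sub>m (mdim M (f x))" unfolding \<Gamma>_def by (rule module_id[OF MM UNIV_I])
    { assume "leQ x y"
      then show "\<Gamma> x y \<in> carrier_mat (mdim M (f y)) (mdim M (f x))"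
        unfolding \<Gamma>_def leQ_def by (rule module_carrier[OF MM UNIV_I UNIV_I]) }
    { assume "leQ x y \<and> leQ y z"
      then show "\<Gamma> y z * \<Gamma> x y = \<Gamma> x z"
        unfolding \<Gamma>_def leQ_def using module_comp[OF MM UNIV_I UNIV_I UNIV_I] by blast }
  qed
  have pb: "pullback e \<Gamma> = M" unfolding pullback_def \<Gamma>_def fe by simp
  have iso: "mod_iso UNIV (\<le>) (pullback e \<Gamma>) M" unfolding pb by (rule mod_iso_refl[OF MM])
  have c: "galois_coupling M M Qs leQ f e f e \<Gamma>"
    unfolding galois_coupling_def using fp gi mm iso by blast
  have "coupling_cost d Qs f f = 0"
  proof -
    have "d x x = 0" for x using d unfolding is_metric_def by blast
    then have "coupling_cost d Qs f f = (SUP q\<in>Qs. (0::ereal))" unfolding coupling_cost_def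
      by (simp add: zero_ereal_def)
    also have "\<dots> = 0" unfolding Qs_def by simp
    finally show ?thesis .
  qed
  then have "d_GT d M M \<le> 0" using dGT_le[OF c, of d] by simp
  then show ?thesis using dGT_nonneg[OF d, of M M] by simp
qed

theorem proposition3p6:
  fixes d :: "'p::{finite,order} \<Rightarrow> 'p \<Rightarrow> real"
    and M N K :: "'p \<Rightarrow> 'p \<Rightarrow> 'k::field mat"
  assumes "is_metric d"
    and "pmodule M" and "pmodule N" and "pmodule K"
  shows "d_GT d M M = 0 \<and> d_GT d M N = d_GT d N M
         \<and> d_GT d M K \<le> d_GT d M N + d_GT d N K"
proof (intro conjI)
  show "d_GT d M M = 0" by (rule dGT_refl[OF assms(1,2)])
  show "d_GT d M N = d_GT d N M" using dGT_sym_le[OF assms(1), of M N] dGT_sym_le[OF assms(1), of N M] by simp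
  let ?A = "{coupling_cost d Qs f h | Qs leQ f g h i (\<Gamma> :: nat \<Rightarrow> nat \<Rightarrow> 'k mat). galois_coupling M N Qs leQ f g h i \<Gamma>}"
  let ?B = "{coupling_cost d Qs f h | Qs leQ f g h i (\<Gamma> :: nat \<Rightarrow> nat \<Rightarrow> 'k mat). galois_coupling N K Qs leQ f g h i \<Gamma>}"
  have A: "\<forall>a\<in>?A. 0 \<le> a" using coupling_cost_nonneg[OF assms(1)] unfolding galois_coupling_def by blast
  have B: "\<forall>b\<in>?B. 0 \<le> b" using coupling_cost_nonneg[OF assms(1)] unfolding galois_coupling_def by blast
  have z: "\<forall>a\<in>?A. \<forall>b\<in>?B. d_GT d M K \<le> a + b"
  proof (intro ballI)
    fix a b assume "a \<in> ?A" "b \<in> ?B"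
    then obtain Q1 l1 f1 g1 h1 i1 and \<Gamma>1 :: "nat \<Rightarrow> nat \<Rightarrow> 'k mat"
      and Q2 l2 f2 g2 h2 i2 and \<Gamma>2 :: "nat \<Rightarrow> nat \<Rightarrow> 'k mat"
      where a: "a = coupling_cost d Q1 f1 h1" and c1: "galois_coupling M N Q1 l1 f1 g1 h1 i1 \<Gamma>1"
        and b: "b = coupling_cost d Q2 f2 h2" and c2: "galois_coupling N K Q2 l2 f2 g2 h2 i2 \<Gamma>2"
      by blast
    obtain Qs leQ f g h i and \<Gamma> :: "nat \<Rightarrow> nat \<Rightarrow> 'k mat" where c: "galois_coupling M K Qs leQ f g h i \<Gamma>"
      and le: "coupling_cost d Qs f h \<le> a + b"
      using triangle_coupling[OF assms c1 c2] a b by blast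
    show "d_GT d M K \<le> a + b" using dGT_le[OF c, of d] le by simp
  qed
  show "d_GT d M K \<le> d_GT d M N + d_GT d N K"
    using Inf_add_le[OF A B z] unfolding d_GT_def .
qed

end
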